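(* Let $d\ge 2$ and let $\varphi:[0,\infty)\to[0,1]$ be the Laplace transform of a strictly positive random variable, continuous and strictly decreasing with $\varphi(0)=1$ and $\lim_{t\to\infty}\varphi(t)=0$, and let $C(u_1,\dots,u_d)=\varphi\big(\sum_{i=1}^d\varphi^{-1}(u_i)\big)$ be the associated Archimedean copula. Suppose $\varphi\in\Gamma_\alpha(g)$ for some $\alpha>0$ and some positive measurable function $g$ that is ultimately decreasing. Suppose moreover that for some $k$ with $1\le k\le d$, $$\lim_{t\to\infty}\frac{\varphi(td)}{\varphi(t)^k}=\tau\in(0,\infty).$$ Then for every $w=(w_1,\dots,w_d)\in\mathbb{R}_+^d$, $$\lim_{u\downarrow 0}\frac{C(uw_1,\dots,uw_d)}{u^k}=\tau\prod_{i=1}^d w_i^{k/d}.$$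
   Context: For $\alpha\ge0$ and a positive measurable function $g$, the class $\Gamma_\alpha(g)$ consists of the measurable functions $f$ such that $\lim_{t\to\infty} f(t+xg(t))/f(t)=e^{-\alpha x}$ for all $x\in\mathbb{R}$. (For $f\in\Gamma_\alpha(g)$ the function $g$ is then self-neglecting: $g(t)/t\to0$ and $g(t+xg(t))/g(t)\to1$ locally uniformly in $x\in\mathbb{R}$.) "Ultimately decreasing" means non-increasing on $[t_0,\infty)$ for some $t_0$. *)

theory Defs
  imports "HOL-Probability.Probability"
begin

definition laplace_transform_of_pos_rv :: "(real \<Rightarrow> real) \<Rightarrow> bool" where
  "laplace_transform_of_pos_rv \<phi> \<longleftrightarrow>
     (\<exists>\<mu>. prob_space \<mu> \<and> sets \<mu> = sets borel \<and> emeasure \<mu> {..0} = 0 \<and>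
          (\<forall>t\<ge>0. \<phi> t = (\<integral>x. exp (- t * x) \<partial>\<mu>)))"

definition Gamma_class :: "real \<Rightarrow> (real \<Rightarrow> real) \<Rightarrow> (real \<Rightarrow> real) set" where
  "Gamma_class \<alpha> g = {f. f \<in> borel_measurable borel \<and>
     (\<forall>x. ((\<lambda>t. f (t + x * g t) / f t) \<longlongrightarrow> exp (- \<alpha> * x)) at_top)}"

definition ultimately_decreasing :: "(real \<Rightarrow> real) \<Rightarrow> bool" where
  "ultimately_decreasing g \<longleftrightarrow> (\<exists>t0. \<forall>s t. t0 \<le> s \<longrightarrow> s \<le> t \<longrightarrow> g t \<le> g s)"

definition gen_inv :: "(real \<Rightarrow> real) \<Rightarrow> real \<Rightarrow> real" where
  "gen_inv \<phi> u = (THE t. t \<ge> 0 \<and> \<phi> t = u)"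

text \<open>Archimedean copula C(u_1..u_d) = phi(sum phi^{-1}(u_i)), with the
  convention phi^{-1}(0) = infinity, phi(infinity) = 0.\<close>
definition arch_copula :: "(real \<Rightarrow> real) \<Rightarrow> nat \<Rightarrow> (nat \<Rightarrow> real) \<Rightarrow> real" where
  "arch_copula \<phi> d u =
     (if \<exists>i<d. u i = 0 then 0 else \<phi> (\<Sum>i<d. gen_inv \<phi> (u i)))"

end

theory Submission imports Defs begin

lemma shift_top: "filterlim (\<lambda>x::real. x + c) at_top at_top"
proof -
  have "filterlim (\<lambda>x::real. c + x) at_top at_top"
    by (rule filterlim_tendsto_add_at_top[OF tendsto_const filterlim_ident])
  then show ?thesis by (simp add: add.commute)
qed

locale conc =
  fixes \<psi> :: "real \<Rightarrow> real"
  assumes conc: "concave_on {0..} \<psi>"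
    and smono: "\<And>x y. 0 \<le> x \<Longrightarrow> x < y \<Longrightarrow> \<psi> x < \<psi> y"
begin

lemma sw: "((- p) - (- q)) / (x - y) = - ((q - p) / (y - x))" for p q x y :: real
proof -
  have e1: "(- p) - (- q) = q - p" and e2: "x - y = - (y - x)" by simp_all
  show ?thesis unfolding e1 e2 by (rule divide_minus_right)
qed

lemma gsl:
  assumes "0 \<le> a" "a < b" "c < e" "a \<le> c" "b \<le> e"
  shows "(\<psi> e - \<psi> c) / (e - c) \<le> (\<psi> b - \<psi> a) / (b - a)"
proof -
  have cv: "convex_on {0..} (\<lambda>x. - \<psi> x)" using conc by (simp add: concave_on_def)
  have 1: "(\<psi> e - \<psi> a) / (e - a) \<le> (\<psi> b - \<psi> a) / (b - a)"
  proof (cases "b = e")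
    case False
    then have "b < e" using assms by simp
    have "((- \<psi> a) - (- \<psi> b)) / (a - b) \<le> ((- \<psi> a) - (- \<psi> e)) / (a - e)"
      by (rule convex_on_slope_le(1)[OF cv]) (use assms \<open>b<e\<close> in auto)
    then show ?thesis unfolding sw by linarith
  qed simp
  have 2: "(\<psi> e - \<psi> c) / (e - c) \<le> (\<psi> e - \<psi> a) / (e - a)"
  proof (cases "a = c")
    case False
    then have "a < c" using assms by simp
    have "((- \<psi> a) - (- \<psi> e)) / (a - e) \<le> ((- \<psi> c) - (- \<psi> e)) / (c - e)"
      by (rule convex_on_slope_le(2)[OF cv]) (use assms \<open>a<c\<close> in auto)
    then show ?thesis unfolding sw by linarith
  qed simp
  from 1 2 show ?thesis by linarith
qed

definition S :: "real \<Rightarrow> real" where "S t = \<psi> (t + 1) - \<psi> t"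
definition L :: real where "L = Inf (S ` {0..})"

lemma S_pos: "0 \<le> t \<Longrightarrow> S t > 0"
  using smono[of t "t+1"] by (simp add: S_def)

lemma S_anti: assumes "0 \<le> t" "t \<le> t'" shows "S t' \<le> S t"
  using gsl[of t "t+1" t' "t'+1"] assms by (simp add: S_def)

lemma bdd: "bdd_below (S ` {0..})"
  by (rule bdd_belowI[of _ 0]) (auto dest: S_pos[THEN less_imp_le])

lemma L_le: "0 \<le> t \<Longrightarrow> L \<le> S t"
  unfolding L_def by (rule cInf_lower[OF _ bdd]) auto

lemma L_ge0: "0 \<le> L"
  unfolding L_def by (rule cInf_greatest) (auto dest: S_pos[THEN less_imp_le])

lemma S_tendsto: "(S \<longlongrightarrow> L) at_top"
proof (rule order_tendstoI)
  fix a assume "a < L"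
  show "eventually (\<lambda>t. a < S t) at_top"
    unfolding eventually_at_top_linorder
  proof (rule exI[of _ 0], intro allI impI)
    fix t :: real assume "0 \<le> t"
    then show "a < S t" using L_le[of t] \<open>a < L\<close> by simp
  qed
next
  fix a assume "L < a"
  then have "Inf (S ` {0..}) < a" by (simp add: L_def)
  then obtain t0 where t0: "0 \<le> t0" "S t0 < a"
    using cInf_lessD[of "S ` {0..}" a] by auto
  show "eventually (\<lambda>t. S t < a) at_top"
    unfolding eventually_at_top_linorder
  proof (rule exI[of _ t0], intro allI impI)
    fix t assume "t0 \<le> t"
    then have "S t \<le> S t0" using S_anti[of t0 t] t0 by simp
    then show "S t < a" using t0 by simp
  qed
qed

lemma K_up: assumes "1 \<le> y" "y < x" shows "\<psi> x - \<psi> y \<le> S (y - 1) * (x - y)"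
proof -
  have "(\<psi> x - \<psi> y) / (x - y) \<le> (\<psi> y - \<psi> (y-1)) / (y - (y-1))"
    using gsl[of "y-1" y y x] assms by simp
  then show ?thesis using assms by (simp add: S_def divide_le_eq mult.commute)
qed

lemma K_low: assumes "0 \<le> y" "y < x" shows "L * (x - y) \<le> \<psi> x - \<psi> y"
proof -
  have "(\<psi> (x+1) - \<psi> x) / ((x+1) - x) \<le> (\<psi> x - \<psi> y) / (x - y)"
    using gsl[of y x x "x+1"] assms by simp
  then have "S x \<le> (\<psi> x - \<psi> y) / (x - y)" by (simp add: S_def)
  moreover have "L \<le> S x" using L_le assms by simp
  ultimately have "L * (x - y) \<le> S x * (x - y)" "S x * (x - y) \<le> \<psi> x - \<psi> y"
    using assms by (auto intro: mult_right_mono simp: le_divide_eq)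
  then show ?thesis by linarith
qed

lemma K_abs_low: assumes "0 \<le> x" "0 \<le> y" shows "L * \<bar>x - y\<bar> \<le> \<bar>\<psi> x - \<psi> y\<bar>"
proof (cases "y < x")
  case True then show ?thesis using K_low[of y x] assms by auto
next
  case False
  show ?thesis
  proof (cases "x = y")
    case False
    then have "x < y" using \<open>\<not> y < x\<close> by simp
    then show ?thesis using K_low[of x y] assms by auto
  qed simp
qed

lemma K_err: assumes "T \<ge> 1" "x \<ge> T" "y \<ge> T"
  shows "\<bar>\<psi> x - \<psi> y - L * (x - y)\<bar> \<le> (S (T - 1) - L) * \<bar>x - y\<bar>"
proof -
  have a: "\<bar>\<psi> x - \<psi> y - L * (x - y)\<bar> \<le> (S (T - 1) - L) * (x - y)" if "T \<le> y" "y < x" for x y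
  proof -
    have "\<psi> x - \<psi> y \<le> S (y - 1) * (x - y)" using K_up[of y x] that assms by simp
    also have "\<dots> \<le> S (T - 1) * (x - y)"
      using S_anti[of "T - 1" "y - 1"] that assms by (intro mult_right_mono) auto
    finally have "\<psi> x - \<psi> y \<le> S (T - 1) * (x - y)" .
    moreover have "L * (x - y) \<le> \<psi> x - \<psi> y" using K_low[of y x] that assms by simp
    ultimately show ?thesis by (simp add: algebra_simps)
  qed
  consider "y < x" | "x < y" | "x = y" by linarith
  then show ?thesis
  proof cases
    case 1 then show ?thesis using a[of y x] assms by simp
  next
    case 2 then show ?thesis using a[of x y] assms by (simp add: abs_minus_commute algebra_simps)
  qed simp
qed

lemma lemM:
  assumes x: "filterlim x at_top F" and y: "filterlim y at_top F"
    and B: "eventually (\<lambda>u. \<bar>x u - y u\<bar> \<le> B) F"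
  shows "((\<lambda>u. \<psi> (x u) - \<psi> (y u) - L * (x u - y u)) \<longlongrightarrow> 0) F"
proof (rule tendstoI)
  fix e :: real assume e: "e > 0"
  have "((\<lambda>t. S (t - 1)) \<longlongrightarrow> L) at_top"
    by (rule filterlim_compose[OF S_tendsto]) (rule filterlim_tendsto_add_at_top[OF tendsto_const filterlim_ident, of "-1", simplified])
  then have "eventually (\<lambda>t. dist (S (t - 1)) L < e / (\<bar>B\<bar> + 1)) at_top"
    using e by (intro tendstoD) auto
  then obtain T0 where T0: "\<And>t. t \<ge> T0 \<Longrightarrow> dist (S (t - 1)) L < e / (\<bar>B\<bar> + 1)"
    by (auto simp: eventually_at_top_linorder)
  define T where "T = max T0 1"
  have ev: "eventually (\<lambda>u. x u \<ge> T \<and> y u \<ge> T \<and> \<bar>x u - y u\<bar> \<le> B) F"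
    using filterlim_at_top[THEN iffD1, OF x, rule_format, of T] filterlim_at_top[THEN iffD1, OF y, rule_format, of T] B
    by eventually_elim auto
  have ST: "S (T - 1) - L < e / (\<bar>B\<bar> + 1)" "0 \<le> S (T - 1) - L"
    using T0[of T] L_le[of "T - 1"] by (auto simp: T_def dist_real_def)
  show "eventually (\<lambda>u. dist (\<psi> (x u) - \<psi> (y u) - L * (x u - y u)) 0 < e) F"
    using ev
  proof eventually_elim
    case (elim u)
    have "\<bar>\<psi> (x u) - \<psi> (y u) - L * (x u - y u)\<bar> \<le> (S (T - 1) - L) * \<bar>x u - y u\<bar>"
      using K_err[of T "x u" "y u"] elim by (simp add: T_def)
    also have "\<dots> \<le> (S (T - 1) - L) * \<bar>B\<bar>"
      using elim ST by (intro mult_left_mono) auto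
    also have "\<dots> \<le> e / (\<bar>B\<bar> + 1) * \<bar>B\<bar>"
      using ST by (intro mult_right_mono) auto
    also have "\<dots> < e" using e by (simp add: field_simps)
    finally show ?case by (simp add: dist_real_def)
  qed
qed

lemma lemM':
  assumes Lpos: "L > 0" and x: "filterlim x at_top F" and y: "filterlim y at_top F"
    and A: "eventually (\<lambda>u. \<psi> (x u) - \<psi> (y u) = A) F"
  shows "((\<lambda>u. x u - y u) \<longlongrightarrow> A / L) F"
proof -
  have ev: "eventually (\<lambda>u. \<bar>x u - y u\<bar> \<le> \<bar>A\<bar> / L) F"
    using filterlim_at_top[THEN iffD1, OF x, rule_format, of 0] filterlim_at_top[THEN iffD1, OF y, rule_format, of 0] A
  proof eventually_elim
    case (elim u)
    then have "L * \<bar>x u - y u\<bar> \<le> \<bar>A\<bar>" using K_abs_low[of "x u" "y u"] by auto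
    then show ?case using Lpos by (simp add: field_simps)
  qed
  have "((\<lambda>u. \<psi> (x u) - \<psi> (y u) - L * (x u - y u)) \<longlongrightarrow> 0) F"
    by (rule lemM[OF x y ev])
  then have "((\<lambda>u. (\<psi> (x u) - \<psi> (y u)) - (\<psi> (x u) - \<psi> (y u) - L * (x u - y u))) \<longlongrightarrow> A - 0) F"
    by (intro tendsto_diff) (use A in \<open>auto intro: tendsto_eventually\<close>)
  then have "((\<lambda>u. L * (x u - y u)) \<longlongrightarrow> A) F" by simp
  then have "((\<lambda>u. (L * (x u - y u)) / L) \<longlongrightarrow> A / L) F" by (intro tendsto_divide) (use Lpos in auto)
  then show ?thesis using Lpos by simp
qed

end

locale gen =
  fixes \<phi> :: "real \<Rightarrow> real"
  assumes LT: "laplace_transform_of_pos_rv \<phi>"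
    and cont: "continuous_on {0..} \<phi>"
    and santi: "strict_antimono_on {0..} \<phi>"
    and phi0: "\<phi> 0 = 1"
    and lim0: "(\<phi> \<longlongrightarrow> 0) at_top"
begin

lemma sa: "0 \<le> x \<Longrightarrow> x < y \<Longrightarrow> \<phi> y < \<phi> x"
  using monotone_onD[OF santi, of x y] by auto

lemma phi_nonneg: assumes "0 \<le> s" shows "0 \<le> \<phi> s"
proof (rule ccontr)
  assume "\<not> 0 \<le> \<phi> s"
  then have "\<phi> s < 0" by simp
  from order_tendstoD(1)[OF lim0 this] obtain N where N: "\<And>t. t \<ge> N \<Longrightarrow> \<phi> s < \<phi> t"
    by (auto simp: eventually_at_top_linorder)
  have "\<phi> s < \<phi> (max N s + 1)" using N[of "max N s + 1"] by simp
  moreover have "\<phi> (max N s + 1) < \<phi> s" using sa[of s "max N s + 1"] assms by simp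
  ultimately show False by simp
qed

lemma phi_pos: assumes "0 \<le> s" shows "0 < \<phi> s"
  using sa[of s "s+1"] phi_nonneg[of "s+1"] assms by simp

lemma phi_le1: assumes "0 \<le> s" shows "\<phi> s \<le> 1"
  using sa[of 0 s] assms phi0 by (cases "s = 0") auto

lemma log_concave: "concave_on {0..} (\<lambda>t. - ln (\<phi> t))"
proof -
  obtain \<mu> where mu: "prob_space \<mu>" "sets \<mu> = sets borel" "emeasure \<mu> {..0} = 0"
    and phi: "\<And>t. t \<ge> 0 \<Longrightarrow> \<phi> t = (\<integral>x. exp (- t * x) \<partial>\<mu>)"
    using LT unfolding laplace_transform_of_pos_rv_def by blast
  interpret prob_space \<mu> by (rule mu(1))
  have meas: "(\<lambda>x. exp (- t * x)) \<in> borel_measurable \<mu>" for t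
  proof -
    have b: "(\<lambda>x. exp (- t * x)) \<in> borel_measurable borel" by measurable
    show ?thesis by (subst measurable_cong_sets[OF mu(2) refl]) (rule b)
  qed
  have AEpos: "AE x in \<mu>. 0 < x"
  proof (rule AE_I')
    show "{..0::real} \<in> null_sets \<mu>" using mu(2,3) by (auto simp: null_sets_def)
    show "{x \<in> space \<mu>. \<not> 0 < x} \<subseteq> {..0}" by auto
  qed
  have int: "integrable \<mu> (\<lambda>x. exp (- t * x))" if "t \<ge> 0" for t
  proof (rule integrable_const_bound[where B=1])
    show "AE x in \<mu>. norm (exp (- t * x)) \<le> 1"
      using AEpos by eventually_elim (use that in \<open>auto simp: mult_nonneg_nonneg\<close>)
  qed (rule meas)
  show ?thesis
  proof (rule concave_on_linorderI)
    fix l x y :: real assume l: "0 < l" "l < 1" and xy: "x \<in> {0..}" "y \<in> {0..}" "x < y"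
    define P where "P = exp ((1 - l) * ln (\<phi> x) + l * ln (\<phi> y))"
    have px: "\<phi> x > 0" and py: "\<phi> y > 0" using phi_pos xy by auto
    define z where "z = (1 - l) * x + l * y"
    have z0: "z \<ge> 0" using l xy by (simp add: z_def)
    have pw: "exp (- z * r) \<le> P * (1 - l) / \<phi> x * exp (- x * r) + P * l / \<phi> y * exp (- y * r)" for r
    proof -
      have "exp ((1 - l) * (- x * r - ln (\<phi> x)) + l * (- y * r - ln (\<phi> y)))
          \<le> (1 - l) * exp (- x * r - ln (\<phi> x)) + l * exp (- y * r - ln (\<phi> y))"
        using convex_onD[OF exp_convex, of l "- x * r - ln (\<phi> x)" "- y * r - ln (\<phi> y)"] l by simp
      moreover have "exp ((1 - l) * (- x * r - ln (\<phi> x)) + l * (- y * r - ln (\<phi> y))) = exp (- z * r) / P"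
        by (simp add: P_def z_def exp_diff[symmetric] algebra_simps)
      moreover have "(1 - l) * exp (- x * r - ln (\<phi> x)) + l * exp (- y * r - ln (\<phi> y))
          = (1 - l) / \<phi> x * exp (- x * r) + l / \<phi> y * exp (- y * r)"
        using px py by (simp add: exp_diff)
      ultimately have "exp (- z * r) / P \<le> (1 - l) / \<phi> x * exp (- x * r) + l / \<phi> y * exp (- y * r)"
        by simp
      then show ?thesis by (simp add: P_def divide_le_eq algebra_simps)
    qed
    have "\<phi> z = (\<integral>r. exp (- z * r) \<partial>\<mu>)" using phi z0 by simp
    also have "\<dots> \<le> (\<integral>r. P * (1 - l) / \<phi> x * exp (- x * r) + P * l / \<phi> y * exp (- y * r) \<partial>\<mu>)"
      by (rule integral_mono) (use int xy z0 pw in auto)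
    also have "\<dots> = P * (1 - l) / \<phi> x * \<phi> x + P * l / \<phi> y * \<phi> y"
      using int xy phi by (simp add: Bochner_Integration.integral_add)
    also have "\<dots> = P" using px py by (simp add: field_simps)
    finally have "\<phi> z \<le> P" .
    then have "ln (\<phi> z) \<le> ln P" using phi_pos[OF z0] by simp
    then show "(1 - l) * - ln (\<phi> x) + l * - ln (\<phi> y) \<le> - ln (\<phi> ((1 - l) *\<^sub>R x + l *\<^sub>R y))"
      by (simp add: P_def z_def)
  qed simp
qed

sublocale conc "\<lambda>t. - ln (\<phi> t)"
proof
  show "concave_on {0..} (\<lambda>t. - ln (\<phi> t))" by (rule log_concave)
  fix x y :: real assume "0 \<le> x" "x < y"
  then show "- ln (\<phi> x) < - ln (\<phi> y)" using sa[of x y] phi_pos[of x] phi_pos[of y] by simp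
qed


lemma gi: assumes "0 < v" "v \<le> 1" shows "gen_inv \<phi> v \<ge> 0 \<and> \<phi> (gen_inv \<phi> v) = v"
proof -
  from order_tendstoD(2)[OF lim0 assms(1)] obtain N where N: "\<And>t. t \<ge> N \<Longrightarrow> \<phi> t < v"
    by (auto simp: eventually_at_top_linorder)
  define T where "T = max N 0"
  have "\<exists>x. 0 \<le> x \<and> x \<le> T \<and> \<phi> x = v"
  proof (rule IVT2')
    show "\<phi> T \<le> v" using N[of T] by (simp add: T_def)
    show "v \<le> \<phi> 0" using phi0 assms by simp
    show "0 \<le> T" by (simp add: T_def)
    show "continuous_on {0..T} \<phi>" by (rule continuous_on_subset[OF cont]) auto
  qed
  then obtain x where x: "0 \<le> x" "\<phi> x = v" by blast
  have uniq: "t = x" if "t \<ge> 0" "\<phi> t = v" for t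
  proof (rule ccontr)
    assume "t \<noteq> x"
    then consider "t < x" | "x < t" by linarith
    then show False using sa[of t x] sa[of x t] that x by cases auto
  qed
  have "\<exists>!t. t \<ge> 0 \<and> \<phi> t = v" using x uniq by blast
  from theI'[OF this] show ?thesis unfolding gen_inv_def .
qed

lemma gi_top: assumes "c > 0" shows "filterlim (\<lambda>u. gen_inv \<phi> (u * c)) at_top (at_right 0)"
  unfolding filterlim_at_top
proof
  fix Z :: real
  define M where "M = max Z 0"
  have pM: "\<phi> M > 0" using phi_pos by (simp add: M_def)
  show "eventually (\<lambda>u. Z \<le> gen_inv \<phi> (u * c)) (at_right 0)"
    unfolding eventually_at_right_field
  proof (intro exI[of _ "min (1 / c) (\<phi> M / c)"] conjI allI impI)
    show "0 < min (1 / c) (\<phi> M / c)" using pM assms by simp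
    fix u :: real assume u: "0 < u" "u < min (1 / c) (\<phi> M / c)"
    then have v: "0 < u * c" "u * c \<le> 1" "u * c < \<phi> M" using assms by (auto simp: field_simps)
    from gi[OF v(1,2)] have t: "gen_inv \<phi> (u * c) \<ge> 0" "\<phi> (gen_inv \<phi> (u * c)) = u * c" by auto
    have "M \<le> gen_inv \<phi> (u * c)"
    proof (rule ccontr)
      assume "\<not> M \<le> gen_inv \<phi> (u * c)"
      then have "\<phi> M < \<phi> (gen_inv \<phi> (u * c))" using sa[of "gen_inv \<phi> (u * c)" M] t by simp
      then show False using t v by simp
    qed
    then show "Z \<le> gen_inv \<phi> (u * c)" by (simp add: M_def)
  qed
qed

lemma Lpos:
  fixes g :: "real \<Rightarrow> real" and \<alpha> :: real
  assumes "\<alpha> > 0" "\<forall>t. g t > 0" "ultimately_decreasing g"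
    and lim: "((\<lambda>t. \<phi> (t + 1 * g t) / \<phi> t) \<longlongrightarrow> exp (- \<alpha> * 1)) at_top"
  shows "L > 0"
proof (rule ccontr)
  assume "\<not> L > 0"
  then have L0: "L = 0" using L_ge0 by simp
  obtain t0 where t0: "\<And>s t. t0 \<le> s \<Longrightarrow> s \<le> t \<Longrightarrow> g t \<le> g s"
    using assms(3) unfolding ultimately_decreasing_def by blast
  have "((\<lambda>t. ln (\<phi> (t + 1 * g t) / \<phi> t)) \<longlongrightarrow> ln (exp (- \<alpha> * 1))) at_top"
    by (rule tendsto_ln[OF lim]) simp
  then have l1: "((\<lambda>t. ln (\<phi> (t + 1 * g t) / \<phi> t)) \<longlongrightarrow> - \<alpha>) at_top" by simp
  have ev: "eventually (\<lambda>t. ln (\<phi> (t + 1 * g t) / \<phi> t) = - ((- ln (\<phi> (t + g t))) - (- ln (\<phi> t)))) at_top"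
    unfolding eventually_at_top_linorder
  proof (intro exI[of _ 0] allI impI)
    fix t :: real assume "0 \<le> t"
    then have "\<phi> t > 0" "\<phi> (t + g t) > 0" using phi_pos assms(2)[rule_format, of t] by auto
    then show "ln (\<phi> (t + 1 * g t) / \<phi> t) = - ((- ln (\<phi> (t + g t))) - (- ln (\<phi> t)))"
      by (simp add: ln_div)
  qed
  have l2: "((\<lambda>t. - ((- ln (\<phi> (t + g t))) - (- ln (\<phi> t)))) \<longlongrightarrow> - \<alpha>) at_top"
    by (rule Lim_transform_eventually[OF l1 ev])
  then have l3: "((\<lambda>t. (- ln (\<phi> (t + g t))) - (- ln (\<phi> t))) \<longlongrightarrow> \<alpha>) at_top"
    using tendsto_minus[OF l2] by simp
  have sl: "((\<lambda>t. S (t - 1)) \<longlongrightarrow> L) at_top"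
    by (rule filterlim_compose[OF S_tendsto]) (rule filterlim_tendsto_add_at_top[OF tendsto_const filterlim_ident, of "-1", simplified])
  then have l4: "((\<lambda>t. S (t - 1) * g t0) \<longlongrightarrow> 0) at_top"
    using tendsto_mult[OF sl tendsto_const[of "g t0"]] L0 by simp
  have ev2: "eventually (\<lambda>t. (- ln (\<phi> (t + g t))) - (- ln (\<phi> t)) \<le> S (t - 1) * g t0) at_top"
    unfolding eventually_at_top_linorder
  proof (intro exI[of _ "max t0 1"] allI impI)
    fix t :: real assume t: "max t0 1 \<le> t"
    have gp: "g t > 0" using assms(2) by simp
    have "(- ln (\<phi> (t + g t))) - (- ln (\<phi> t)) \<le> S (t - 1) * (t + g t - t)"
      using K_up[of t "t + g t"] t gp by simp
    also have "\<dots> \<le> S (t - 1) * g t0"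
      using t0[of t0 t] t S_pos[of "t - 1"] by (intro mult_left_mono) auto
    finally show "(- ln (\<phi> (t + g t))) - (- ln (\<phi> t)) \<le> S (t - 1) * g t0" .
  qed
  have "\<alpha> \<le> 0" by (rule tendsto_le[OF _ l4 l3 ev2]) simp
  then show False using assms(1) by simp
qed

lemma kd:
  fixes k \<tau> D :: real
  assumes Lp: "L > 0" and D: "D > 0" and tau: "\<tau> > 0"
    and lim: "((\<lambda>t. \<phi> (t * D) / (\<phi> t) powr k) \<longlongrightarrow> \<tau>) at_top"
  shows "k = D"
proof -
  define F where "F t = ln (\<phi> (t * D) / (\<phi> t) powr k)" for t
  have F: "(F \<longlongrightarrow> ln \<tau>) at_top" unfolding F_def by (rule tendsto_ln[OF lim]) (use tau in simp)
  have F1: "((\<lambda>t. F (t + 1)) \<longlongrightarrow> ln \<tau>) at_top"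
    by (rule filterlim_compose[OF F]) (rule shift_top)
  have A: "((\<lambda>t. F (t + 1) - F t) \<longlongrightarrow> 0) at_top" using tendsto_diff[OF F1 F] by simp
  have Fe: "F t = - (- ln (\<phi> (D * t))) + k * (- ln (\<phi> t))" if "t \<ge> 0" for t
  proof -
    have "\<phi> t > 0" "\<phi> (t * D) > 0" using phi_pos that D by auto
    then show ?thesis by (simp add: F_def ln_div ln_powr mult.commute)
  qed
  have xt: "filterlim (\<lambda>t. D * t) at_top at_top"
    by (rule filterlim_tendsto_pos_mult_at_top[OF tendsto_const D filterlim_ident])
  have xt1: "filterlim (\<lambda>t. D * (t + 1)) at_top at_top"
    by (rule filterlim_compose[OF xt]) (rule shift_top)
  have E: "((\<lambda>t. (- ln (\<phi> (D * (t + 1)))) - (- ln (\<phi> (D * t))) - L * (D * (t + 1) - D * t)) \<longlongrightarrow> 0) at_top"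
    by (rule lemM[OF xt1 xt, of D]) (simp add: algebra_simps D less_imp_le)
  have B: "((\<lambda>t. - ((- ln (\<phi> (D * (t + 1)))) - (- ln (\<phi> (D * t))) - L * (D * (t + 1) - D * t)) - L * D + k * S t)
      \<longlongrightarrow> - 0 - L * D + k * L) at_top"
    by (intro tendsto_intros E S_tendsto)
  have ev: "eventually (\<lambda>t. F (t + 1) - F t = - ((- ln (\<phi> (D * (t + 1)))) - (- ln (\<phi> (D * t))) - L * (D * (t + 1) - D * t)) - L * D + k * S t) at_top"
    unfolding eventually_at_top_linorder
  proof (intro exI[of _ 0] allI impI)
    fix t :: real assume "0 \<le> t"
    then show "F (t + 1) - F t = - ((- ln (\<phi> (D * (t + 1)))) - (- ln (\<phi> (D * t))) - L * (D * (t + 1) - D * t)) - L * D + k * S t"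
      using Fe[of t] Fe[of "t+1"] by (simp add: S_def algebra_simps)
  qed
  have B': "((\<lambda>t. F (t + 1) - F t) \<longlongrightarrow> - 0 - L * D + k * L) at_top"
    by (rule Lim_transform_eventually[OF B]) (use ev in \<open>simp add: eq_commute\<close>)
  have "- 0 - L * D + k * L = 0" using tendsto_unique[OF _ B' A] by simp
  then have "L * (k - D) = 0" by (simp add: algebra_simps)
  then show ?thesis using Lp by simp
qed

end


theorem theorem3p3:
  fixes \<phi> g :: "real \<Rightarrow> real" and d :: nat and \<alpha> k \<tau> :: real and w :: "nat \<Rightarrow> real"
  assumes "d \<ge> 2"
    and "laplace_transform_of_pos_rv \<phi>"
    and "continuous_on {0..} \<phi>"
    and "strict_antimono_on {0..} \<phi>"
    and "\<phi> 0 = 1"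
    and "(\<phi> \<longlongrightarrow> 0) at_top"
    and "\<alpha> > 0"
    and "\<forall>t. g t > 0" and "g \<in> borel_measurable borel"
    and "ultimately_decreasing g"
    and "\<phi> \<in> Gamma_class \<alpha> g"
    and "1 \<le> k" and "k \<le> real d"
    and "\<tau> > 0"
    and "((\<lambda>t. \<phi> (t * real d) / (\<phi> t) powr k) \<longlongrightarrow> \<tau>) at_top"
    and "\<forall>i<d. w i \<ge> 0"
  shows "((\<lambda>u. arch_copula \<phi> d (\<lambda>i. u * w i) / u powr k)
            \<longlongrightarrow> \<tau> * (\<Prod>i<d. w i powr (k / real d))) (at_right 0)"
proof -
  interpret gen \<phi> by (rule gen.intro) (use assms in auto)
  have G1: "((\<lambda>t. \<phi> (t + 1 * g t) / \<phi> t) \<longlongrightarrow> exp (- \<alpha> * 1)) at_top"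
    using assms(11) unfolding Gamma_class_def by blast
  have Lp: "L > 0" by (rule Lpos[of \<alpha> g]) (use assms G1 in auto)
  define D where "D = real d"
  have Dp: "D > 0" using assms(1) by (simp add: D_def)
  have kD: "k = D" by (rule kd[OF Lp Dp assms(14)]) (use assms(15) in \<open>simp add: D_def\<close>)
  show ?thesis
  proof (cases "\<exists>i<d. w i = 0")
    case True
    then obtain i where i: "i < d" "w i = 0" by blast
    have p0: "(\<Prod>i<d. w i powr (k / real d)) = 0"
      using i by (intro prod_zero) auto
    have ac: "arch_copula \<phi> d (\<lambda>i. u * w i) = 0" for u
      using i unfolding arch_copula_def by auto
    show ?thesis unfolding p0 ac by simp
  next
    case False
    then have wp: "\<And>i. i < d \<Longrightarrow> w i > 0" using assms(16) by force
    define ps where "ps t = - ln (\<phi> t)" for t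
    define t0 where "t0 u = gen_inv \<phi> u" for u
    define ti where "ti i u = gen_inv \<phi> (u * w i)" for i u
    define X where "X u = (\<Sum>i<d. ti i u)" for u
    define Y where "Y u = D * t0 u" for u
    define a where "a i = - ln (w i)" for i
    have top0: "filterlim t0 at_top (at_right 0)"
      using gi_top[of 1] by (simp add: t0_def[abs_def])
    have topi: "filterlim (ti i) at_top (at_right 0)" if "i < d" for i
      using gi_top[of "w i"] wp[OF that] by (simp add: ti_def[abs_def])
    have evu: "eventually (\<lambda>u. 0 < u \<and> u \<le> 1 \<and> (\<forall>i\<in>{..<d}. u * w i \<le> 1)) (at_right 0)"
    proof -
      have e1: "eventually (\<lambda>u. 0 < u \<and> u \<le> 1) (at_right (0::real))"
        unfolding eventually_at_right_field by (intro exI[of _ 1]) auto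
      have e2: "eventually (\<lambda>u. \<forall>i\<in>{..<d}. u * w i \<le> 1) (at_right (0::real))"
      proof (rule eventually_ball_finite)
        show "\<forall>i\<in>{..<d}. eventually (\<lambda>u. u * w i \<le> 1) (at_right 0)"
        proof
          fix i assume "i \<in> {..<d}"
          then have "w i > 0" using wp by simp
          then show "eventually (\<lambda>u. u * w i \<le> 1) (at_right 0)"
            unfolding eventually_at_right_field
            by (intro exI[of _ "1 / w i"]) (auto simp: field_simps)
        qed
      qed simp
      show ?thesis using e1 e2 by eventually_elim auto
    qed
    have gi0: "t0 u \<ge> 0 \<and> \<phi> (t0 u) = u" if "0 < u" "u \<le> 1" for u
      using gi[OF that] by (simp add: t0_def)
    have gii: "ti i u \<ge> 0 \<and> \<phi> (ti i u) = u * w i" if "0 < u" "i < d" "u * w i \<le> 1" for u i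
      using gi[of "u * w i"] that wp[OF that(2)] by (simp add: ti_def)
    have dif: "((\<lambda>u. ti i u - t0 u) \<longlongrightarrow> a i / L) (at_right 0)" if "i < d" for i
    proof (rule lemM'[OF Lp topi[OF that] top0])
      show "eventually (\<lambda>u. - ln (\<phi> (ti i u)) - - ln (\<phi> (t0 u)) = a i) (at_right 0)"
        using evu
      proof eventually_elim
        case (elim u)
        then show ?case using gi0[of u] gii[of u i] that wp[OF that]
          by (simp add: a_def ln_mult)
      qed
    qed
    have XY: "X u - Y u = (\<Sum>i<d. ti i u - t0 u)" for u
      by (simp add: X_def Y_def D_def sum_subtractf)
    have sumlim: "((\<lambda>u. X u - Y u) \<longlongrightarrow> (\<Sum>i<d. a i / L)) (at_right 0)"
      unfolding XY by (intro tendsto_sum dif) simp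
    have Ytop: "filterlim Y at_top (at_right 0)"
      unfolding Y_def[abs_def] by (rule filterlim_tendsto_pos_mult_at_top[OF tendsto_const Dp top0])
    have Xtop: "filterlim X at_top (at_right 0)"
    proof -
      have "filterlim (\<lambda>u. (X u - Y u) + Y u) at_top (at_right 0)"
        by (rule filterlim_tendsto_add_at_top[OF sumlim Ytop])
      then show ?thesis by simp
    qed
    define b where "b = (\<Sum>i<d. a i / L)"
    have bnd: "eventually (\<lambda>u. \<bar>X u - Y u\<bar> \<le> \<bar>b\<bar> + 1) (at_right 0)"
    proof -
      have "eventually (\<lambda>u. dist (X u - Y u) b < 1) (at_right 0)"
        using tendstoD[OF sumlim[folded b_def], of 1] by simp
      then show ?thesis by eventually_elim (auto simp: dist_real_def)
    qed
    have M: "((\<lambda>u. - ln (\<phi> (X u)) - - ln (\<phi> (Y u)) - L * (X u - Y u)) \<longlongrightarrow> 0) (at_right 0)"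
      by (rule lemM[OF Xtop Ytop bnd])
    have Lb: "L * b = (\<Sum>i<d. a i)"
      using Lp by (simp add: b_def sum_distrib_left)
    have PXY: "((\<lambda>u. - ln (\<phi> (X u)) - - ln (\<phi> (Y u))) \<longlongrightarrow> (\<Sum>i<d. a i)) (at_right 0)"
    proof -
      have "((\<lambda>u. (- ln (\<phi> (X u)) - - ln (\<phi> (Y u)) - L * (X u - Y u)) + L * (X u - Y u)) \<longlongrightarrow> 0 + L * b) (at_right 0)"
        by (intro tendsto_add M tendsto_mult tendsto_const sumlim[folded b_def])
      then show ?thesis using Lb by simp
    qed
    define F where "F t = ln (\<phi> (t * D) / (\<phi> t) powr k)" for t
    have Flim: "(F \<longlongrightarrow> ln \<tau>) at_top" unfolding F_def
      by (rule tendsto_ln) (use assms(14,15) in \<open>auto simp: D_def\<close>)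
    have Ft0: "((\<lambda>u. F (t0 u)) \<longlongrightarrow> ln \<tau>) (at_right 0)"
      by (rule filterlim_compose[OF Flim top0])
    have Elim: "((\<lambda>u. - (- ln (\<phi> (X u)) - - ln (\<phi> (Y u))) + F (t0 u)) \<longlongrightarrow> - (\<Sum>i<d. a i) + ln \<tau>) (at_right 0)"
      by (intro tendsto_intros PXY Ft0)
    have expl: "((\<lambda>u. exp (- (- ln (\<phi> (X u)) - - ln (\<phi> (Y u))) + F (t0 u))) \<longlongrightarrow> exp (- (\<Sum>i<d. a i) + ln \<tau>)) (at_right 0)"
      by (rule tendsto_exp[OF Elim])
    have val: "exp (- (\<Sum>i<d. a i) + ln \<tau>) = \<tau> * (\<Prod>i<d. w i powr (k / real d))"
    proof -
      have "exp (- (\<Sum>i<d. a i) + ln \<tau>) = \<tau> * exp (\<Sum>i<d. ln (w i))"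
        using assms(14) by (simp add: a_def exp_add sum_negf)
      also have "exp (\<Sum>i<d. ln (w i)) = (\<Prod>i<d. w i)"
        by (simp add: exp_sum wp)
      also have "(\<Prod>i<d. w i) = (\<Prod>i<d. w i powr (k / real d))"
        using kD Dp by (intro prod.cong refl) (simp add: D_def powr_one less_imp_le wp)
      finally show ?thesis .
    qed
    have evq: "eventually (\<lambda>u. exp (- (- ln (\<phi> (X u)) - - ln (\<phi> (Y u))) + F (t0 u))
        = arch_copula \<phi> d (\<lambda>i. u * w i) / u powr k) (at_right 0)"
      using evu
    proof eventually_elim
      case (elim u)
      then have u: "0 < u" "u \<le> 1" and uw: "\<And>i. i < d \<Longrightarrow> u * w i \<le> 1" by auto
      have t0p: "t0 u \<ge> 0" "\<phi> (t0 u) = u" using gi0 u by auto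
      have X0: "X u \<ge> 0" unfolding X_def using gii u uw by (intro sum_nonneg) auto
      have ac: "arch_copula \<phi> d (\<lambda>i. u * w i) = \<phi> (X u)"
      proof -
        have "\<not> (\<exists>i<d. u * w i = 0)" using u wp by (metis less_irrefl mult_pos_pos)
        then show ?thesis unfolding arch_copula_def X_def ti_def by (simp only: if_False)
      qed
      have pX: "\<phi> (X u) > 0" using phi_pos X0 by simp
      have pY: "\<phi> (t0 u * D) > 0" using phi_pos t0p Dp by simp
      have YY: "Y u = t0 u * D" by (simp add: Y_def mult.commute)
      have "- (- ln (\<phi> (X u)) - - ln (\<phi> (Y u))) + F (t0 u) = ln (\<phi> (X u)) - k * ln u"
        unfolding F_def YY using pX pY t0p u by (simp add: ln_div ln_powr)
      then have "exp (- (- ln (\<phi> (X u)) - - ln (\<phi> (Y u))) + F (t0 u)) = exp (ln (\<phi> (X u)) - k * ln u)"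
        by (rule arg_cong[where f=exp])
      also have "\<dots> = \<phi> (X u) / u powr k"
        using pX u by (simp add: exp_diff powr_def)
      finally have "exp (- (- ln (\<phi> (X u)) - - ln (\<phi> (Y u))) + F (t0 u)) = \<phi> (X u) / u powr k" .
      then show ?case using ac by simp
    qed
    show ?thesis
      using Lim_transform_eventually[OF expl evq] val by simp
  qed
qed

end
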